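(* Let $\gamma\in[0,1)$, $\lambda\ge0$, let $V$ be the value function defined in the context, and let $V_{CQL}$ be the unique bounded fixed point of the CQL Bellman backup $B_{CQL}$ defined in the context. Then $$V(x)-\frac{\lambda}{1-\gamma}\le V_{CQL}(x)\le V(x)-\lambda\quad\text{for all }x\in\mathbb{R}^n.$$
   Context: Setting: States $x\in\mathbb{R}^n$; compact sets $\mathcal{U}\subseteq\mathbb{R}^m$ (controls) and $\mathcal{D}\subseteq\mathbb{R}^\ell$ (disturbances); dynamics $f:\mathbb{R}^n\times\mathcal{U}\times\mathcal{D}\to\mathbb{R}^n$, Lipschitz continuous in the state. For sequences $\mathbf{u}=\{u_t\}_{t\ge0}\subset\mathcal{U}$, $\mathbf{d}=\{d_t\}_{t\ge0}\subset\mathcal{D}$, the trajectory is $\xi_x^{\mathbf{u},\mathbf{d}}(0)=x$, $\xi_x^{\mathbf{u},\mathbf{d}}(t+1)=f(\xi_x^{\mathbf{u},\mathbf{d}}(t),u_t,d_t)$ for $t\in\mathbb{Z}_+$. Let $r,c:\mathbb{R}^n\to\mathbb{R}$ be bounded Lipschitz continuous functions. A map $\phi$ from control sequences to disturbance sequences is a non-anticipative strategy if whenever $u_t=\bar u_t$ for all $t\in\{0,\dots,T\}$, then $\phi(\mathbf{u})_t=\phi(\bar{\mathbf{u}})_t$ for all $t\in\{0,\dots,T\}$; $\Phi$ is the set of all such strategies. Value function: $$V(x)=\inf_{\phi\in\Phi}\ \sup_{\mathbf{u}}\ \sup_{t\in\mathbb{Z}_+}\ \min\Big\{\gamma^t r\big(\xi_x^{\mathbf{u},\phi(\mathbf{u})}(t)\big),\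 \min_{\tau=0,\dots,t}\gamma^\tau c\big(\xi_x^{\mathbf{u},\phi(\mathbf{u})}(\tau)\big)\Big\}$$ (the paper writes $\max_{\mathbf{u}}$ over control sequences). Bellman backup, for bounded $U:\mathbb{R}^n\to\mathbb{R}$: $B[U](x)=\min\{c(x),\max\{r(x),\gamma\max_{u\in\mathcal{U}}\min_{d\in\mathcal{D}}U(f(x,u,d))\}\}$. CQL Bellman backup: $B_{CQL}[U](x)=B[U](x)-\lambda$; this is a $\gamma$-contraction in the sup norm on bounded functions, and $V_{CQL}$ denotes its unique bounded fixed point (the limit of the iteration $V^{(k+1)}=B_{CQL}[V^{(k)}]$ from any bounded initial function). *)

theory Defs
  imports "HOL-Analysis.Analysis"
begin

primrec traj :: "('x \<Rightarrow> 'u \<Rightarrow> 'd \<Rightarrow> 'x) \<Rightarrow> 'x \<Rightarrow> (nat \<Rightarrow> 'u) \<Rightarrow> (nat \<Rightarrow> 'd) \<Rightarrow> nat \<Rightarrow> 'x" where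
  "traj f x u d 0 = x"
| "traj f x u d (Suc t) = f (traj f x u d t) (u t) (d t)"

definition seqs :: "'a set \<Rightarrow> (nat \<Rightarrow> 'a) set" where
  "seqs A = {s. \<forall>t. s t \<in> A}"

definition nonanticipative :: "'u set \<Rightarrow> 'd set \<Rightarrow> ((nat \<Rightarrow> 'u) \<Rightarrow> (nat \<Rightarrow> 'd)) set" where
  "nonanticipative U D = {\<phi>. (\<forall>u\<in>seqs U. \<phi> u \<in> seqs D) \<and>
     (\<forall>u\<in>seqs U. \<forall>u'\<in>seqs U. \<forall>T. (\<forall>t\<le>T. u t = u' t) \<longrightarrow> (\<forall>t\<le>T. \<phi> u t = \<phi> u' t))}"

definition payoff :: "('x \<Rightarrow> 'u \<Rightarrow> 'd \<Rightarrow> 'x) \<Rightarrow> ('x \<Rightarrow> real) \<Rightarrow> ('x \<Rightarrow> real) \<Rightarrow> real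
    \<Rightarrow> 'x \<Rightarrow> (nat \<Rightarrow> 'u) \<Rightarrow> (nat \<Rightarrow> 'd) \<Rightarrow> real" where
  "payoff f r c \<gamma> x u d = (SUP t::nat. min (\<gamma> ^ t * r (traj f x u d t))
      (Min ((\<lambda>\<tau>. \<gamma> ^ \<tau> * c (traj f x u d \<tau>)) ` {..t})))"

definition value_fn :: "('x \<Rightarrow> 'u \<Rightarrow> 'd \<Rightarrow> 'x) \<Rightarrow> 'u set \<Rightarrow> 'd set \<Rightarrow> ('x \<Rightarrow> real) \<Rightarrow> ('x \<Rightarrow> real)
    \<Rightarrow> real \<Rightarrow> 'x \<Rightarrow> real" where
  "value_fn f U D r c \<gamma> x = (INF \<phi>\<in>nonanticipative U D. SUP u\<in>seqs U. payoff f r c \<gamma> x u (\<phi> u))"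

text \<open>Bellman backup (max/min over the compact sets rendered as Sup/Inf).\<close>
definition bellman :: "('x \<Rightarrow> 'u \<Rightarrow> 'd \<Rightarrow> 'x) \<Rightarrow> 'u set \<Rightarrow> 'd set \<Rightarrow> ('x \<Rightarrow> real) \<Rightarrow> ('x \<Rightarrow> real)
    \<Rightarrow> real \<Rightarrow> ('x \<Rightarrow> real) \<Rightarrow> 'x \<Rightarrow> real" where
  "bellman f U D r c \<gamma> W x = min (c x) (max (r x) (\<gamma> * (SUP u\<in>U. INF d\<in>D. W (f x u d))))"

definition bellman_cql :: "('x \<Rightarrow> 'u \<Rightarrow> 'd \<Rightarrow> 'x) \<Rightarrow> 'u set \<Rightarrow> 'd set \<Rightarrow> ('x \<Rightarrow> real) \<Rightarrow> ('x \<Rightarrow> real)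
    \<Rightarrow> real \<Rightarrow> real \<Rightarrow> ('x \<Rightarrow> real) \<Rightarrow> 'x \<Rightarrow> real" where
  "bellman_cql f U D r c \<gamma> lam W x = bellman f U D r c \<gamma> W x - lam"

end

theory Submission imports Defs begin

lemma traj_shift:
  "traj f x u d (Suc t) = traj f (f x (u 0) (d 0)) (\<lambda>s. u (Suc s)) (\<lambda>s. d (Suc s)) t"
  by (induction t) auto

lemma mono_cont_SUP:
  fixes h :: "real \<Rightarrow> real"
  assumes "mono h" "continuous_on UNIV h" "A \<noteq> {}" "bdd_above (g ` A)"
  shows "h (SUP a\<in>A. g a) = (SUP a\<in>A. h (g a))"
proof -
  have "continuous (at_left (Sup (g ` A))) h"
    using assms(2) by (metis continuous_at_imp_continuous_within open_UNIV continuous_on_eq_continuous_at UNIV_I)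
  from continuous_at_Sup_mono[OF assms(1) this] assms(3,4)
  show ?thesis by (simp add: image_image)
qed

lemma h_mono: "0 \<le> (g::real) \<Longrightarrow> mono (\<lambda>y. min a (max b (g * y)))"
  unfolding mono_def by (intro allI impI min.mono[OF order_refl] max.mono[OF order_refl] mult_left_mono)

lemma h2_mono: "0 \<le> (g::real) \<Longrightarrow> mono (\<lambda>y. min a (g * y))"
  unfolding mono_def by (intro allI impI min.mono[OF order_refl] mult_left_mono)

lemma h2_cont: "continuous_on UNIV (\<lambda>y::real. min a (g * y))"
  by (intro continuous_intros)

lemma h_cont: "continuous_on UNIV (\<lambda>y::real. min a (max b (g * y)))"
  by (intro continuous_intros)

lemma SUP_nat_split:
  fixes a :: "nat \<Rightarrow> real"
  assumes "bdd_above (range a)"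
  shows "(SUP t. a t) = max (a 0) (SUP t. a (Suc t))"
proof -
  have U: "(UNIV::nat set) = insert 0 (range Suc)"
    by (metis UNIV_eq_I insert_iff not0_implies_Suc rangeI)
  have b: "bdd_above (a ` range Suc)" using assms by (rule bdd_above_mono) auto
  have "(SUP t. a t) = Sup (a ` insert 0 (range Suc))" by (subst U[symmetric]) simp
  also have "\<dots> = sup (a 0) (Sup (a ` range Suc))" by (rule cSUP_insert) (use b in auto)
  also have "\<dots> = max (a 0) (SUP t. a (Suc t))" by (simp add: image_image sup_max)
  finally show ?thesis .
qed

locale rg =
  fixes f :: "'x \<Rightarrow> 'u \<Rightarrow> 'd \<Rightarrow> 'x" and U :: "'u set" and D :: "'d set"
    and r c :: "'x \<Rightarrow> real" and \<gamma> M :: real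
  assumes Une: "U \<noteq> {}" and Dne: "D \<noteq> {}"
    and rb: "\<And>x. \<bar>r x\<bar> \<le> M" and cb: "\<And>x. \<bar>c x\<bar> \<le> M"
    and g0: "0 \<le> \<gamma>" and g1: "\<gamma> \<le> 1"
begin

abbreviation "P \<equiv> payoff f r c \<gamma>"
abbreviation "NA \<equiv> nonanticipative U D"
abbreviation "V \<equiv> value_fn f U D r c \<gamma>"
definition "J x \<phi> = (SUP u\<in>seqs U. P x u (\<phi> u))"

definition "term x u d t = min (\<gamma> ^ t * r (traj f x u d t))
      (Min ((\<lambda>\<tau>. \<gamma> ^ \<tau> * c (traj f x u d \<tau>)) ` {..t}))"

lemma P_term: "P x u d = (SUP t. term x u d t)"
  unfolding payoff_def term_def ..

lemma gpow: "0 \<le> \<gamma> ^ t" "\<gamma> ^ t \<le> 1"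
  using g0 g1 by (auto simp: power_le_one)

lemma term_bounds: "- M \<le> term x u d t \<and> term x u d t \<le> M"
proof -
  have A: "\<bar>\<gamma> ^ t * r y\<bar> \<le> M" "\<bar>\<gamma> ^ t * c y\<bar> \<le> M" for t y
  proof -
    have "\<bar>\<gamma> ^ t * r y\<bar> \<le> 1 * \<bar>r y\<bar>" using gpow[of t]
      by (simp add: abs_mult mult_left_le_one_le)
    then show "\<bar>\<gamma> ^ t * r y\<bar> \<le> M" using rb[of y] by simp
    have "\<bar>\<gamma> ^ t * c y\<bar> \<le> 1 * \<bar>c y\<bar>" using gpow[of t]
      by (simp add: abs_mult mult_left_le_one_le)
    then show "\<bar>\<gamma> ^ t * c y\<bar> \<le> M" using cb[of y] by simp
  qed
  have B: "- M \<le> \<gamma> ^ \<tau> * c y" for \<tau> y using A(2)[of \<tau> y] by linarith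
  have "- M \<le> Min ((\<lambda>\<tau>. \<gamma> ^ \<tau> * c (traj f x u d \<tau>)) ` {..t})"
    using B by (auto simp: Min_ge_iff)
  then show ?thesis using A(1)[of t "traj f x u d t"] unfolding term_def
    by (auto simp: abs_le_iff)
qed

lemma term_bdd: "bdd_above (range (term x u d))"
  using term_bounds by (intro bdd_aboveI[of _ M]) auto

lemma P_bounds: "- M \<le> P x u d \<and> P x u d \<le> M"
proof
  show "- M \<le> P x u d" unfolding P_term
    using term_bounds[of x u d 0] cSUP_upper[OF UNIV_I term_bdd, of x u d 0] by linarith
  show "P x u d \<le> M" unfolding P_term
    using term_bounds by (intro cSUP_least) auto
qed

lemma term_Suc:
  "term x u d (Suc t) = min (c x) (\<gamma> * term (f x (u 0) (d 0)) (\<lambda>s. u (Suc s)) (\<lambda>s. d (Suc s)) t)"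
proof -
  define y where "y = f x (u 0) (d 0)"
  define u' where "u' = (\<lambda>s. u (Suc s))"
  define d' where "d' = (\<lambda>s. d (Suc s))"
  have tr: "traj f x u d (Suc s) = traj f y u' d' s" for s
    unfolding y_def u'_def d'_def by (rule traj_shift)
  have "(\<lambda>\<tau>. \<gamma> ^ \<tau> * c (traj f x u d \<tau>)) ` {..Suc t}
      = insert (c x) ((*) \<gamma> ` (\<lambda>\<tau>. \<gamma> ^ \<tau> * c (traj f y u' d' \<tau>)) ` {..t})"
  proof -
    have e: "(\<lambda>\<tau>. \<gamma> ^ \<tau> * c (traj f x u d \<tau>)) \<circ> Suc = (\<lambda>\<tau>. \<gamma> * (\<gamma> ^ \<tau> * c (traj f y u' d' \<tau>)))"
      by (rule ext) (simp only: o_def tr power_Suc mult.assoc)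
    show ?thesis unfolding atMost_Suc_eq_insert_0 image_insert image_comp e
      by (simp add: image_image)
  qed
  then have "Min ((\<lambda>\<tau>. \<gamma> ^ \<tau> * c (traj f x u d \<tau>)) ` {..Suc t})
      = min (c x) (\<gamma> * Min ((\<lambda>\<tau>. \<gamma> ^ \<tau> * c (traj f y u' d' \<tau>)) ` {..t}))"
    using mono_Min_commute[of "(*) \<gamma>" "(\<lambda>\<tau>. \<gamma> ^ \<tau> * c (traj f y u' d' \<tau>)) ` {..t}"] g0
    by (simp add: Min_insert mono_def mult_left_mono)
  then show ?thesis
    unfolding term_def y_def[symmetric] u'_def[symmetric] d'_def[symmetric]
    using g0 by (simp del: traj.simps add: tr min_mult_distrib_left mult.assoc min.assoc min.commute min.left_commute)
qed

lemma P_rec: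
  "P x u d = min (c x) (max (r x) (\<gamma> * P (f x (u 0) (d 0)) (\<lambda>s. u (Suc s)) (\<lambda>s. d (Suc s))))"
proof -
  define y where "y = f x (u 0) (d 0)"
  define u' where "u' = (\<lambda>s. u (Suc s))"
  define d' where "d' = (\<lambda>s. d (Suc s))"
  have "P x u d = max (term x u d 0) (SUP t. term x u d (Suc t))"
    unfolding P_term by (rule SUP_nat_split[OF term_bdd])
  also have "term x u d 0 = min (r x) (c x)" by (simp add: term_def)
  also have "(SUP t. term x u d (Suc t)) = (SUP t. min (c x) (\<gamma> * term y u' d' t))"
    unfolding term_Suc y_def u'_def d'_def by simp
  also have "\<dots> = min (c x) (\<gamma> * P y u' d')"
    unfolding P_term
    by (rule mono_cont_SUP[symmetric, OF h2_mono[OF g0] h2_cont]) (auto intro: term_bdd)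
  finally show ?thesis unfolding y_def u'_def d'_def
    by (simp add: min_def max_def)
qed


lemma seqsU_ne: "seqs U \<noteq> {}"
  using Une by (auto simp: seqs_def)

lemma NA_ne: "NA \<noteq> {}"
proof -
  obtain d0 where "d0 \<in> D" using Dne by auto
  then have "(\<lambda>_ _. d0) \<in> NA" by (auto simp: nonanticipative_def seqs_def)
  then show ?thesis by auto
qed

lemma J_bdd: "bdd_above ((\<lambda>u. P x u (\<phi> u)) ` A)"
  using P_bounds by (intro bdd_aboveI[of _ M]) auto

lemma J_bounds: "- M \<le> J x \<phi> \<and> J x \<phi> \<le> M"
proof
  obtain u where u: "u \<in> seqs U" using seqsU_ne by auto
  show "- M \<le> J x \<phi>" unfolding J_def
    using P_bounds[of x u "\<phi> u"] cSUP_upper[OF u J_bdd] by (meson order_trans)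
  show "J x \<phi> \<le> M" unfolding J_def using P_bounds seqsU_ne by (intro cSUP_least) auto
qed

lemma V_eq: "V x = (INF \<phi>\<in>NA. J x \<phi>)"
  unfolding value_fn_def J_def ..

lemma Jbb: "bdd_below ((\<lambda>\<phi>. J x \<phi>) ` A)"
  using J_bounds by (intro bdd_belowI[of _ "-M"]) auto

lemma V_bounds: "- M \<le> V x \<and> V x \<le> M"
proof
  obtain \<phi> where p: "\<phi> \<in> NA" using NA_ne by auto
  show "V x \<le> M" unfolding V_eq
    using J_bounds[of x \<phi>] cINF_lower[OF Jbb p] by (meson order_trans)
  show "- M \<le> V x" unfolding V_eq using J_bounds NA_ne by (intro cINF_greatest) auto
qed

lemma bounded_fun_INF:
  fixes W :: "'z \<Rightarrow> real"
  assumes "\<And>y. \<bar>W y\<bar> \<le> K"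
  shows "- K \<le> (INF d\<in>D. W (g d)) \<and> (INF d\<in>D. W (g d)) \<le> K"
proof
  obtain d where d: "d \<in> D" using Dne by auto
  have lo: "- K \<le> W y" for y using assms[of y] by linarith
  have bb: "bdd_below ((\<lambda>d. W (g d)) ` D)" using lo
    by (intro bdd_belowI[of _ "-K"]) auto
  show "(INF d\<in>D. W (g d)) \<le> K" using cINF_lower[OF bb d] assms[of "g d"] by (auto simp: abs_le_iff)
  show "- K \<le> (INF d\<in>D. W (g d))" using lo Dne by (intro cINF_greatest) auto
qed

end

context rg begin

lemma NA_D: "\<phi> \<in> NA \<Longrightarrow> u \<in> seqs U \<Longrightarrow> \<phi> u \<in> seqs D"
  unfolding nonanticipative_def by blast

lemma NA_ag: "\<phi> \<in> NA \<Longrightarrow> u \<in> seqs U \<Longrightarrow> u' \<in> seqs U \<Longrightarrow> \<forall>t\<le>T. u t = u' t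
   \<Longrightarrow> t \<le> T \<Longrightarrow> \<phi> u t = \<phi> u' t"
  unfolding nonanticipative_def by blast

lemma Vabs: "\<bar>V y\<bar> \<le> M" using V_bounds[of y] by linarith

lemma I_bdd: "bdd_above ((\<lambda>u0. INF d\<in>D. V (f x u0 d)) ` U)"
proof (rule bdd_aboveI[of _ M])
  fix y assume "y \<in> (\<lambda>u0. INF d\<in>D. V (f x u0 d)) ` U"
  then obtain u0 where "y = (INF d\<in>D. V (f x u0 d))" by auto
  then show "y \<le> M" using bounded_fun_INF[OF Vabs, of "f x u0"] by simp
qed

lemma Vf_bb: "bdd_below ((\<lambda>d. V (f x u0 d)) ` D)"
  using V_bounds by (intro bdd_belowI[of _ "-M"]) auto

lemma DPP_le: "V x \<le> bellman f U D r c \<gamma> V x"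
proof -
 have main: "V x \<le> bellman f U D r c \<gamma> V x + 2 * e" if e: "0 < e" for e :: real
 proof -
  define I where "I u0 = (INF d\<in>D. V (f x u0 d))" for u0
  define S where "S = (SUP u0\<in>U. I u0)"
  define h where "h y = min (c x) (max (r x) (\<gamma> * y))" for y
  have B: "bellman f U D r c \<gamma> V x = h S" unfolding bellman_def h_def S_def I_def ..
  have "\<forall>u0\<in>U. \<exists>d\<in>D. V (f x u0 d) < I u0 + e"
  proof
    fix u0 assume "u0 \<in> U"
    have "Inf ((\<lambda>d. V (f x u0 d)) ` D) < I u0 + e" using e unfolding I_def by simp
    from cInf_lessD[OF _ this] Dne show "\<exists>d\<in>D. V (f x u0 d) < I u0 + e" by auto
  qed
  then obtain d0 where d0: "\<And>u0. u0 \<in> U \<Longrightarrow> d0 u0 \<in> D \<and> V (f x u0 (d0 u0)) < I u0 + e"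
    by metis
  have "\<forall>y. \<exists>\<psi>\<in>NA. J y \<psi> < V y + e"
  proof
    fix y
    have "Inf ((\<lambda>\<psi>. J y \<psi>) ` NA) < V y + e" using e unfolding V_eq by simp
    from cInf_lessD[OF _ this] NA_ne show "\<exists>\<psi>\<in>NA. J y \<psi> < V y + e" by auto
  qed
  then obtain \<psi> where psi: "\<And>y. \<psi> y \<in> NA \<and> J y (\<psi> y) < V y + e" by metis
  define \<phi> where "\<phi> u = (\<lambda>t. if t = 0 then d0 (u 0)
      else \<psi> (f x (u 0) (d0 (u 0))) (\<lambda>s. u (Suc s)) (t - 1))" for u :: "nat \<Rightarrow> 'u"
  have shU: "(\<lambda>s. u (Suc s)) \<in> seqs U" if "u \<in> seqs U" for u
    using that by (auto simp: seqs_def)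
  have phiNA: "\<phi> \<in> NA"
    unfolding nonanticipative_def
  proof (intro CollectI conjI ballI allI impI)
    fix u assume u: "u \<in> seqs U"
    have u0: "u 0 \<in> U" using u by (auto simp: seqs_def)
    have "\<psi> (f x (u 0) (d0 (u 0))) (\<lambda>s. u (Suc s)) \<in> seqs D"
      using NA_D[OF _ shU[OF u]] psi by blast
    then show "\<phi> u \<in> seqs D" using d0[OF u0] unfolding \<phi>_def seqs_def by auto
  next
    fix u u' T t assume u: "u \<in> seqs U" and u': "u' \<in> seqs U"
      and ag: "\<forall>t\<le>T. u t = u' t" and t: "t \<le> T"
    have e0: "u 0 = u' 0" using ag by auto
    show "\<phi> u t = \<phi> u' t"
    proof (cases "t = 0")
      case True then show ?thesis using e0 by (simp add: \<phi>_def)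
    next
      case False
      have ag': "\<forall>s\<le>T - 1. u (Suc s) = u' (Suc s)" using ag False t by auto
      have "\<psi> (f x (u 0) (d0 (u 0))) \<in> NA" using psi by blast
      from NA_ag[OF this shU[OF u] shU[OF u'] ag', of "t - 1"]
      show ?thesis using False t e0 by (simp add: \<phi>_def)
    qed
  qed
  have hmono: "a \<le> b \<Longrightarrow> h a \<le> h b" for a b
    using h_mono[OF g0] unfolding h_def mono_def by blast
  have hshift: "h (a + k) \<le> h a + k" if "0 \<le> k" for a k
  proof -
    have "\<gamma> * (a + k) \<le> \<gamma> * a + k" using g1 that
      by (simp add: distrib_left mult_left_le_one_le g0)
    then show ?thesis unfolding h_def min_def max_def using that by auto
  qed
  have "J x \<phi> \<le> h S + 2 * e"
    unfolding J_def
  proof (rule cSUP_least[OF seqsU_ne])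
    fix u assume u: "u \<in> seqs U"
    have u0: "u 0 \<in> U" using u by (auto simp: seqs_def)
    define y where "y = f x (u 0) (d0 (u 0))"
    have p0: "\<phi> u 0 = d0 (u 0)" by (simp add: \<phi>_def)
    have ps: "(\<lambda>s. \<phi> u (Suc s)) = \<psi> y (\<lambda>s. u (Suc s))" by (simp add: \<phi>_def y_def)
    have "P x u (\<phi> u) = h (P y (\<lambda>s. u (Suc s)) (\<psi> y (\<lambda>s. u (Suc s))))"
      by (subst P_rec) (simp only: p0 ps y_def[symmetric] h_def)
    also have "\<dots> \<le> h (J y (\<psi> y))"
      by (rule hmono) (unfold J_def, rule cSUP_upper[OF shU[OF u] J_bdd])
    also have "\<dots> \<le> h (S + 2 * e)"
    proof (rule hmono)
      have "J y (\<psi> y) < V y + e" using psi by blast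
      also have "V y < I (u 0) + e" using d0[OF u0] unfolding y_def by blast
      also have "I (u 0) \<le> S" unfolding S_def using cSUP_upper[OF u0 I_bdd] I_def by simp
      finally show "J y (\<psi> y) \<le> S + 2 * e" by simp
    qed
    also have "\<dots> \<le> h S + 2 * e" using hshift e by simp
    finally show "P x u (\<phi> u) \<le> h S + 2 * e" .
  qed
  moreover have "V x \<le> J x \<phi>" unfolding V_eq by (rule cINF_lower[OF Jbb phiNA])
  ultimately show ?thesis using B by simp
 qed
 show ?thesis
 proof (rule field_le_epsilon)
   fix e :: real assume "0 < e"
   then show "V x \<le> bellman f U D r c \<gamma> V x + e" using main[of "e/2"] by simp
 qed
qed


lemma DPP_ge: "bellman f U D r c \<gamma> V x \<le> V x"
proof -
  define I where "I u0 = (INF d\<in>D. V (f x u0 d))" for u0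
  define h where "h y = min (c x) (max (r x) (\<gamma> * y))" for y
  have hmono: "a \<le> b \<Longrightarrow> h a \<le> h b" for a b
    using h_mono[OF g0] unfolding h_def mono_def by blast
  have hSUP: "h (SUP a\<in>A. g a) = (SUP a\<in>A. h (g a))" if "A \<noteq> {}" "bdd_above (g ` A)" for A and g :: "'z \<Rightarrow> real"
    unfolding h_def by (rule mono_cont_SUP[OF h_mono[OF g0] h_cont that])
  have B: "bellman f U D r c \<gamma> V x = (SUP u0\<in>U. h (I u0))"
    unfolding bellman_def h_def[symmetric] I_def by (rule hSUP[OF Une I_bdd])
  show ?thesis unfolding B V_eq
  proof (rule cINF_greatest[OF NA_ne], rule cSUP_least[OF Une])
    fix \<phi> u0 assume phi: "\<phi> \<in> NA" and u0: "u0 \<in> U"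
    define cs where "cs v = (\<lambda>t. if t = 0 then u0 else v (t - 1))" for v :: "nat \<Rightarrow> 'u"
    have csU: "cs v \<in> seqs U" if "v \<in> seqs U" for v
      using that u0 by (auto simp: seqs_def cs_def)
    have c0U: "(\<lambda>_. u0) \<in> seqs U" using u0 by (auto simp: seqs_def)
    define d0 where "d0 = \<phi> (\<lambda>_. u0) 0"
    have d0D: "d0 \<in> D" using NA_D[OF phi c0U] unfolding d0_def seqs_def by blast
    define y where "y = f x u0 d0"
    define \<psi> where "\<psi> v = (\<lambda>t. \<phi> (cs v) (Suc t))" for v
    have psiNA: "\<psi> \<in> NA"
      unfolding nonanticipative_def
    proof (intro CollectI conjI ballI allI impI)
      fix v assume v: "v \<in> seqs U"
      show "\<psi> v \<in> seqs D" using NA_D[OF phi csU[OF v]] by (auto simp: seqs_def \<psi>_def)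
    next
      fix v v' T t assume v: "v \<in> seqs U" and v': "v' \<in> seqs U"
        and ag: "\<forall>t\<le>T. v t = v' t" and t: "t \<le> T"
      have ag': "\<forall>s\<le>Suc T. cs v s = cs v' s" using ag by (auto simp: cs_def)
      show "\<psi> v t = \<psi> v' t" unfolding \<psi>_def
        using NA_ag[OF phi csU[OF v] csU[OF v'] ag', of "Suc t"] t by simp
    qed
    have "h (I u0) \<le> h (J y \<psi>)"
    proof (rule hmono)
      have "I u0 \<le> V y" unfolding I_def y_def by (rule cINF_lower[OF Vf_bb d0D])
      also have "V y \<le> J y \<psi>" unfolding V_eq by (rule cINF_lower[OF Jbb psiNA])
      finally show "I u0 \<le> J y \<psi>" .
    qed
    also have "h (J y \<psi>) = (SUP v\<in>seqs U. h (P y v (\<psi> v)))"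
      unfolding J_def by (rule hSUP[OF seqsU_ne J_bdd])
    also have "\<dots> \<le> J x \<phi>"
    proof (rule cSUP_least[OF seqsU_ne])
      fix v assume v: "v \<in> seqs U"
      have ag0: "\<forall>s\<le>0. cs v s = (\<lambda>_. u0) s" by (simp add: cs_def)
      have p0: "\<phi> (cs v) 0 = d0" unfolding d0_def
        using NA_ag[OF phi csU[OF v] c0U ag0, of 0] by simp
      have c0: "cs v 0 = u0" by (simp add: cs_def)
      have sh: "(\<lambda>s. cs v (Suc s)) = v" by (simp add: cs_def)
      have sp: "(\<lambda>s. \<phi> (cs v) (Suc s)) = \<psi> v" by (simp add: \<psi>_def)
      have "h (P y v (\<psi> v)) = P x (cs v) (\<phi> (cs v))"
        by (subst P_rec) (simp only: p0 c0 sh sp y_def[symmetric] h_def)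
      also have "\<dots> \<le> J x \<phi>" unfolding J_def by (rule cSUP_upper[OF csU[OF v] J_bdd])
      finally show "h (P y v (\<psi> v)) \<le> J x \<phi>" .
    qed
    finally show "h (I u0) \<le> J x \<phi>" .
  qed
qed

lemma DPP: "bellman f U D r c \<gamma> V x = V x"
  using DPP_le DPP_ge by (rule antisym[rotated])


lemma minmax_shift: "(a::real) \<le> b + t \<Longrightarrow> 0 \<le> t \<Longrightarrow> min cc (max rr a) \<le> min cc (max rr b) + t"
  by (auto simp: min_def max_def)

lemma bell_shift:
  fixes W1 W2 :: "'x \<Rightarrow> real"
  assumes b1: "\<And>y. \<bar>W1 y\<bar> \<le> K1" and b2: "\<And>y. \<bar>W2 y\<bar> \<le> K2"
    and le: "\<And>y. W1 y \<le> W2 y + k" and k: "0 \<le> k"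
  shows "bellman f U D r c \<gamma> W1 x \<le> bellman f U D r c \<gamma> W2 x + \<gamma> * k"
proof -
  define I1 where "I1 u = (INF d\<in>D. W1 (f x u d))" for u
  define I2 where "I2 u = (INF d\<in>D. W2 (f x u d))" for u
  have bb1: "bdd_below ((\<lambda>d. W1 (f x u d)) ` D)" for u
  proof (rule bdd_belowI[of _ "-K1"])
    fix z assume "z \<in> (\<lambda>d. W1 (f x u d)) ` D"
    then obtain d where "z = W1 (f x u d)" by auto
    then show "- K1 \<le> z" using b1[of "f x u d"] by linarith
  qed
  have I2b: "I2 u \<le> K2" for u using bounded_fun_INF[OF b2, of "f x u"] unfolding I2_def by simp
  have ba2: "bdd_above (I2 ` U)" using I2b by (intro bdd_aboveI[of _ K2]) auto
  have Ik: "I1 u \<le> I2 u + k" for u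
  proof -
    have "I1 u - k \<le> I2 u" unfolding I2_def
    proof (rule cINF_greatest[OF Dne])
      fix d assume d: "d \<in> D"
      have "I1 u \<le> W1 (f x u d)" unfolding I1_def by (rule cINF_lower[OF bb1 d])
      then show "I1 u - k \<le> W2 (f x u d)" using le[of "f x u d"] by simp
    qed
    then show ?thesis by simp
  qed
  have S: "(SUP u\<in>U. I1 u) \<le> (SUP u\<in>U. I2 u) + k"
  proof (rule cSUP_least[OF Une])
    fix u assume u: "u \<in> U"
    show "I1 u \<le> (SUP u\<in>U. I2 u) + k" using Ik[of u] cSUP_upper[OF u ba2] by simp
  qed
  then have "\<gamma> * (SUP u\<in>U. I1 u) \<le> \<gamma> * (SUP u\<in>U. I2 u) + \<gamma> * k"
    using g0 by (metis distrib_left mult_left_mono)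
  then show ?thesis unfolding bellman_def I1_def[symmetric] I2_def[symmetric]
    using g0 k by (intro minmax_shift) auto
qed

end

theorem theorem4:
  fixes f :: "real^'n \<Rightarrow> real^'m \<Rightarrow> real^'l \<Rightarrow> real^'n"
    and U :: "(real^'m) set" and D :: "(real^'l) set"
    and r c :: "real^'n \<Rightarrow> real"
    and \<gamma> lam :: real
    and Vcql :: "real^'n \<Rightarrow> real"
  assumes "compact U" "U \<noteq> {}" "compact D" "D \<noteq> {}"
    and "\<exists>L. \<forall>u\<in>U. \<forall>d\<in>D. L-lipschitz_on UNIV (\<lambda>x. f x u d)"
    and "bounded (range r)" "\<exists>L. L-lipschitz_on UNIV r"
    and "bounded (range c)" "\<exists>L. L-lipschitz_on UNIV c"
    and "0 \<le> \<gamma>" "\<gamma> < 1" "0 \<le> lam"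
    and "bounded (range Vcql)"
    and "\<forall>x. Vcql x = bellman_cql f U D r c \<gamma> lam Vcql x"
  shows "\<forall>x. value_fn f U D r c \<gamma> x - lam / (1 - \<gamma>) \<le> Vcql x
           \<and> Vcql x \<le> value_fn f U D r c \<gamma> x - lam"
proof -
  obtain Mr where Mr: "\<And>x. \<bar>r x\<bar> \<le> Mr" using assms(6) unfolding bounded_iff by auto
  obtain Mc where Mc: "\<And>x. \<bar>c x\<bar> \<le> Mc" using assms(8) unfolding bounded_iff by auto
  obtain Kq where Kq: "\<And>x. \<bar>Vcql x\<bar> \<le> Kq" using assms(13) unfolding bounded_iff by auto
  define M where "M = max Mr Mc"
  interpret rg f U D r c \<gamma> M
  proof
    show "U \<noteq> {}" "D \<noteq> {}" "0 \<le> \<gamma>" "\<gamma> \<le> 1" using assms(2,4,10,11) by auto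
    fix x
    show "\<bar>r x\<bar> \<le> M" using Mr[of x] unfolding M_def by linarith
    show "\<bar>c x\<bar> \<le> M" using Mc[of x] unfolding M_def by linarith
  qed
  have fp: "Vcql x = bellman f U D r c \<gamma> Vcql x - lam" for x
    using assms(14) unfolding bellman_cql_def by blast
  have Vb: "\<bar>V x\<bar> \<le> M" for x by (rule Vabs)
  have g: "0 \<le> \<gamma>" "\<gamma> < 1" "0 \<le> lam" using assms(10,11,12) by auto
  define e where "e = (SUP x. Vcql x - V x + lam)"
  have eb: "bdd_above (range (\<lambda>x. Vcql x - V x + lam))"
  proof (rule bdd_aboveI[of _ "Kq + M + lam"])
    fix z assume "z \<in> range (\<lambda>x. Vcql x - V x + lam)"
    then obtain x where "z = Vcql x - V x + lam" by auto
    then show "z \<le> Kq + M + lam" using Kq[of x] Vb[of x] by (auto simp: abs_le_iff)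
  qed
  have ex: "Vcql x - V x + lam \<le> e" for x unfolding e_def by (rule cSUP_upper[OF UNIV_I eb])
  define k where "k = max (e - lam) 0"
  have "Vcql x - V x + lam \<le> \<gamma> * k" for x
  proof -
    have "\<And>y. Vcql y \<le> V y + k" using ex unfolding k_def by (smt (verit))
    from bell_shift[of Vcql Kq V M k x, OF Kq Vb this] have "bellman f U D r c \<gamma> Vcql x \<le> V x + \<gamma> * k"
      using DPP[of x] k_def by simp
    then show ?thesis using fp[of x] by simp
  qed
  then have "e \<le> \<gamma> * k" unfolding e_def by (intro cSUP_least) auto
  then have e0: "e \<le> 0"
  proof (cases "e - lam \<le> 0")
    case True then show ?thesis using \<open>e \<le> \<gamma> * k\<close> unfolding k_def by simp
  next
    case False
    then have "e \<le> \<gamma> * (e - lam)" using \<open>e \<le> \<gamma> * k\<close> unfolding k_def by simp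
    also have "\<dots> \<le> \<gamma> * e" using g by (simp add: mult_left_mono)
    finally have "(1 - \<gamma>) * e \<le> 0" by (simp add: algebra_simps)
    then show ?thesis using g by (simp add: mult_le_0_iff)
  qed
  define q where "q = (SUP x. V x - Vcql x)"
  have qb: "bdd_above (range (\<lambda>x. V x - Vcql x))"
  proof (rule bdd_aboveI[of _ "Kq + M"])
    fix z assume "z \<in> range (\<lambda>x. V x - Vcql x)"
    then obtain x where "z = V x - Vcql x" by auto
    then show "z \<le> Kq + M" using Kq[of x] Vb[of x] by (auto simp: abs_le_iff)
  qed
  have qx: "V x - Vcql x \<le> q" for x unfolding q_def by (rule cSUP_upper[OF UNIV_I qb])
  define k2 where "k2 = max q 0"
  have "V x - Vcql x \<le> lam + \<gamma> * k2" for x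
  proof -
    have "\<And>y. V y \<le> Vcql y + k2" using qx unfolding k2_def by (smt (verit))
    from bell_shift[of V M Vcql Kq k2 x, OF Vb Kq this] have "bellman f U D r c \<gamma> V x \<le> Vcql x + lam + \<gamma> * k2"
      using fp[of x] k2_def by simp
    then show ?thesis using DPP[of x] by simp
  qed
  then have ql: "q \<le> lam + \<gamma> * k2" unfolding q_def by (intro cSUP_least) auto
  have q1: "q \<le> lam / (1 - \<gamma>)"
  proof (cases "q \<le> 0")
    case True
    moreover have "0 \<le> lam / (1 - \<gamma>)" using g by simp
    ultimately show ?thesis by linarith
  next
    case False
    then have "q \<le> lam + \<gamma> * q" using ql unfolding k2_def by simp
    then have "q * (1 - \<gamma>) \<le> lam" by (simp add: algebra_simps)
    then show ?thesis using g by (simp add: pos_le_divide_eq)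
  qed
  show ?thesis
  proof
    fix x
    show "V x - lam / (1 - \<gamma>) \<le> Vcql x \<and> Vcql x \<le> V x - lam"
      using qx[of x] q1 ex[of x] e0 by linarith
  qed
qed

end
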